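(* For every partition $\mu$ of $n$, the set of monomials $\mathcal{A}(\mu)$ coincides with the Garsia–Procesi basis $\mathcal{B}(\mu)$.
   Context: A partition $\mu$ of $n$ is drawn as a Young diagram with left-justified rows, row lengths weakly decreasing top to bottom. A row-strict filling of $\mu$ places $1,\dots,n$ bijectively in the boxes with entries increasing left to right along rows. Dimension pairs (with $h(j)=j$): $(a,b)$ is a dimension pair of $T$ if $b>a$; $b$ lies in the same column as $a$ strictly below it, or in a column strictly left of $a$'s; and if the box immediately right of $a$ exists and contains $c$, then $b\le c$. $\Phi(T)=\prod_{j=2}^n x_j^{|D^T_j|}$ where $D^T_j$ is the set of dimension pairs $(a,j)$; $\mathcal{A}(\mu)=\{\Phi(T):T$ row-strict filling of $\mu\}$. Dimension-ordering of a diagram with $r$ nonzero rows: label the far-right boxes of the nonzero rows $1,\dots,r$, ordering them by column from rightmost to leftmost and within a column top to bottom. GP-tree of $\mu$: Level $n$ consists of $\mu$. A Young diagram $\nu$ at Level $i$ with $r$ nonzero rows has $r$ children at Level $i-1$ via edges labelled $x_i^0,\dots,x_i^{r-1}$ (left to right); the child along $x_i^j$ is obtained from $\nu$ by removing the box with dimension-order label $j+1$ and then, if this leaves a gap in that box's column, pushing the boxes of that column below the gap up by one so the result is again a Young diagram. Level 1 vertices (single boxes) are labelled by the product of the edge labels on the path from the root. $\mathcal{B}(\mu)$ is the set of these Level 1 monomials (the Garsia–Procesi monomial basis of $\mathbb{Q}[x_1,\dots,x_n]/I_\mu$, $I_\mu$ the Tanisaki ideal). *)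

theory Defs
  imports Main
begin

text \<open>Boxes are pairs (row, column), 0-indexed, rows numbered top to bottom.
  Monomials in x_1,...,x_n are represented by exponent functions nat => nat
  (value at j = exponent of x_j).\<close>

type_synonym box = "nat \<times> nat"
type_synonym monomial = "nat \<Rightarrow> nat"

definition is_partition :: "nat list \<Rightarrow> nat \<Rightarrow> bool" where
  "is_partition \<mu> n \<longleftrightarrow> sorted (rev \<mu>) \<and> (\<forall>x\<in>set \<mu>. 0 < x) \<and> sum_list \<mu> = n"

definition diagram :: "nat list \<Rightarrow> box set" where
  "diagram \<mu> = {(r, c). r < length \<mu> \<and> c < \<mu> ! r}"

definition row_strict_filling :: "nat list \<Rightarrow> (box \<Rightarrow> nat) \<Rightarrow> bool" where
  "row_strict_filling \<mu> T \<longleftrightarrow>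
     bij_betw T (diagram \<mu>) {1..sum_list \<mu>} \<and>
     (\<forall>r c c'. (r, c) \<in> diagram \<mu> \<longrightarrow> (r, c') \<in> diagram \<mu> \<longrightarrow> c < c' \<longrightarrow> T (r, c) < T (r, c'))"

definition dim_pair :: "nat list \<Rightarrow> (box \<Rightarrow> nat) \<Rightarrow> nat \<Rightarrow> nat \<Rightarrow> bool" where
  "dim_pair \<mu> T a b \<longleftrightarrow> b > a \<and>
     (\<exists>p\<in>diagram \<mu>. \<exists>q\<in>diagram \<mu>. T p = a \<and> T q = b \<and>
        ((snd q = snd p \<and> fst q > fst p) \<or> snd q < snd p) \<and>
        ((fst p, Suc (snd p)) \<in> diagram \<mu> \<longrightarrow> b \<le> T (fst p, Suc (snd p))))"

definition Phi :: "nat list \<Rightarrow> (box \<Rightarrow> nat) \<Rightarrow> monomial" where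
  "Phi \<mu> T = (\<lambda>j. if 2 \<le> j \<and> j \<le> sum_list \<mu> then card {a. dim_pair \<mu> T a j} else 0)"

definition setA :: "nat list \<Rightarrow> monomial set" where
  "setA \<mu> = {Phi \<mu> T | T. row_strict_filling \<mu> T}"

definition nonzero_rows :: "box set \<Rightarrow> nat set" where
  "nonzero_rows D = {r. (r, 0) \<in> D}"

definition row_len :: "box set \<Rightarrow> nat \<Rightarrow> nat" where
  "row_len D r = card {c. (r, c) \<in> D}"

definition far_right :: "box set \<Rightarrow> box set" where
  "far_right D = {(r, row_len D r - 1) | r. r \<in> nonzero_rows D}"

definition dim_before :: "box \<Rightarrow> box \<Rightarrow> bool" where
  "dim_before p q \<longleftrightarrow> snd p > snd q \<or> (snd p = snd q \<and> fst p < fst q)"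

definition dim_label :: "box set \<Rightarrow> box \<Rightarrow> nat" where
  "dim_label D b = Suc (card {p \<in> far_right D. dim_before p b})"

definition remove_push :: "box set \<Rightarrow> box \<Rightarrow> box set" where
  "remove_push D b =
     {(r', c') \<in> D - {b}. c' \<noteq> snd b \<or> r' < fst b} \<union>
     {(r' - 1, snd b) | r'. r' > fst b \<and> (r', snd b) \<in> D}"

definition gp_child :: "box set \<Rightarrow> nat \<Rightarrow> box set" where
  "gp_child D j = remove_push D (THE b. b \<in> far_right D \<and> dim_label D b = Suc j)"

text \<open>Monomials labelling the level-1 leaves of the GP-subtree rooted at a diagram at level i.
  (Convention: at level 0 or 1 the subtree contributes only the empty product.)\<close>
fun gp_monos :: "nat \<Rightarrow> box set \<Rightarrow> monomial set" where
  "gp_monos 0 D = {(\<lambda>_. 0)}"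
| "gp_monos (Suc 0) D = {(\<lambda>_. 0)}"
| "gp_monos (Suc (Suc k)) D =
     (\<Union>j<card (nonzero_rows D). (\<lambda>m. m(Suc (Suc k) := j)) ` gp_monos (Suc k) (gp_child D j))"

definition setB :: "nat list \<Rightarrow> monomial set" where
  "setB \<mu> = gp_monos (sum_list \<mu>) (diagram \<mu>)"

end

theory Submission
  imports Defs "HOL-Library.Multiset"
begin


definition cnt :: "(nat \<Rightarrow> nat) \<Rightarrow> nat \<Rightarrow> nat \<Rightarrow> nat" where
  "cnt f R t = card {v\<in>{1..<t}. f v = R}"

definition PS :: "(nat \<Rightarrow> nat) \<Rightarrow> nat \<Rightarrow> nat set" where
  "PS f j = {R. R \<noteq> f j \<and> (cnt f (f j) j + 2 \<le> cnt f R j \<or> (cnt f R j = cnt f (f j) j + 1 \<and> R < f j))}"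

definition Phi2 :: "nat \<Rightarrow> (nat \<Rightarrow> nat) \<Rightarrow> monomial" where
  "Phi2 n f = (\<lambda>j. if 2 \<le> j \<and> j \<le> n then card (PS f j) else 0)"

definition valid :: "nat list \<Rightarrow> (nat \<Rightarrow> nat) \<Rightarrow> bool" where
  "valid \<mu> f \<longleftrightarrow> (\<forall>v\<in>{1..sum_list \<mu>}. f v < length \<mu>) \<and>
     (\<forall>r<length \<mu>. cnt f r (Suc (sum_list \<mu>)) = \<mu>!r)"

definition A2 :: "nat list \<Rightarrow> monomial set" where
  "A2 \<mu> = {Phi2 (sum_list \<mu>) f | f. valid \<mu> f}"

lemma cnt_cong:
  assumes "\<And>v. 1 \<le> v \<Longrightarrow> v < t \<Longrightarrow> f v = g v"
  shows "cnt f R t = cnt g R t"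
  unfolding cnt_def using assms by (intro arg_cong[where f=card]) auto

lemma PS_cong:
  assumes "\<And>v. 1 \<le> v \<Longrightarrow> v \<le> j \<Longrightarrow> f v = g v" "1 \<le> j"
  shows "PS f j = PS g j"
proof -
  have "\<And>R t. t \<le> j \<Longrightarrow> cnt f R t = cnt g R t"
    by (rule cnt_cong) (use assms in auto)
  moreover have "f j = g j" using assms by auto
  ultimately show ?thesis unfolding PS_def by simp
qed

lemma PS_finite: "finite (PS f j)"
proof -
  have "PS f j \<subseteq> f ` {1..<j}"
  proof
    fix R assume "R \<in> PS f j"
    then have "cnt f R j \<noteq> 0" unfolding PS_def by auto
    then have "{v\<in>{1..<j}. f v = R} \<noteq> {}" unfolding cnt_def by (metis card.empty)
    then show "R \<in> f ` {1..<j}" by auto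
  qed
  then show ?thesis by (rule finite_subset) auto
qed

lemma swap_lemma:
  assumes v: "valid \<mu> f" and i: "Suc i < length \<mu>"
  shows "\<exists>g. valid (\<mu>[i := \<mu>!Suc i, Suc i := \<mu>!i]) g \<and> Phi2 (sum_list \<mu>) g = Phi2 (sum_list \<mu>) f"
proof -
  define n where "n = sum_list \<mu>"
  define \<nu> where "\<nu> = \<mu>[i := \<mu>!Suc i, Suc i := \<mu>!i]"
  have len: "length \<nu> = length \<mu>" unfolding \<nu>_def by simp
  have "mset \<nu> = mset \<mu>" unfolding \<nu>_def using i mset_swap[of "Suc i" \<mu> i] by simp
  then have sn: "sum_list \<nu> = n" unfolding n_def by (metis sum_mset_sum_list)
  define P where "P t \<longleftrightarrow> 1 \<le> t \<and> t \<le> Suc n \<and> cnt f i t = cnt f (Suc i) t" for t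
  define t0 where "t0 = (GREATEST t. P t)"
  have P1: "P 1" unfolding P_def cnt_def by simp
  have Pb: "\<And>y. P y \<Longrightarrow> y \<le> Suc n" unfolding P_def by auto
  have Pt0: "P t0" unfolding t0_def by (rule GreatestI_nat[where P=P, OF P1 Pb])
  have Pmax: "\<And>t. P t \<Longrightarrow> t \<le> t0" unfolding t0_def by (rule Greatest_le_nat[where P=P]) (use Pb in auto)
  define tr where "tr x = (if x = i then Suc i else if x = Suc i then i else x)" for x
  have trtr: "tr (tr x) = x" for x unfolding tr_def by auto
  have tr_eq: "tr a = b \<longleftrightarrow> a = tr b" for a b using trtr by metis
  define g where "g v = (if t0 \<le> v then tr (f v) else f v)" for v
  have c1: "cnt g R t = cnt f R t" if "t \<le> t0" for R t
    by (rule cnt_cong) (use that in \<open>auto simp: g_def\<close>)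
  have c2: "cnt g R t = cnt f (tr R) t" if "t0 \<le> t" for R t
  proof -
    have t01: "1 \<le> t0" using Pt0 P_def by auto
    have A: "{v\<in>{1..<t}. g v = R} = {v\<in>{1..<t0}. f v = R} \<union> {v\<in>{t0..<t}. f v = tr R}"
      using that t01 by (auto simp: g_def tr_eq)
    have B: "{v\<in>{1..<t}. f v = tr R} = {v\<in>{1..<t0}. f v = tr R} \<union> {v\<in>{t0..<t}. f v = tr R}"
      using that t01 by auto
    have C: "card {v\<in>{1..<t0}. f v = R} = card {v\<in>{1..<t0}. f v = tr R}"
    proof -
      have "cnt f R t0 = cnt f (tr R) t0"
        using Pt0 unfolding P_def tr_def by auto
      then show ?thesis unfolding cnt_def .
    qed
    have "cnt g R t = card {v\<in>{1..<t0}. f v = R} + card {v\<in>{t0..<t}. f v = tr R}"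
      unfolding cnt_def A by (rule card_Un_disjoint) auto
    also have "\<dots> = cnt f (tr R) t"
      unfolding cnt_def B C by (rule card_Un_disjoint[symmetric]) auto
    finally show ?thesis .
  qed
  have valid_g: "valid \<nu> g"
    unfolding valid_def sn len
  proof (intro conjI allI impI ballI)
    fix v assume "v \<in> {1..n}"
    then have "f v < length \<mu>" using v unfolding valid_def n_def by auto
    then show "g v < length \<mu>" using i unfolding g_def tr_def by auto
  next
    fix r assume r: "r < length \<mu>"
    have "t0 \<le> Suc n" using Pt0 P_def by auto
    then have "cnt g r (Suc n) = cnt f (tr r) (Suc n)" by (rule c2)
    also have "\<dots> = \<mu> ! tr r" using v r i unfolding valid_def n_def tr_def by auto
    also have "\<dots> = \<nu> ! r" unfolding \<nu>_def tr_def using r i by (auto simp: nth_list_update)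
    finally show "cnt g r (Suc n) = \<nu> ! r" .
  qed
  have "Phi2 n g = Phi2 n f"
  proof
    fix j
    show "Phi2 n g j = Phi2 n f j"
    proof (cases "2 \<le> j \<and> j \<le> n")
      case False then show ?thesis unfolding Phi2_def by auto
    next
      case jr: True
      show ?thesis
      proof (cases "j < t0")
        case True
        then have "PS g j = PS f j" by (intro PS_cong) (use jr in \<open>auto simp: g_def\<close>)
        then show ?thesis unfolding Phi2_def by simp
      next
        case False
        then have jt: "t0 \<le> j" by simp
        have gj: "g j = tr (f j)" using jt g_def by simp
        have cj: "cnt g R j = cnt f (tr R) j" for R using c2[OF jt] .
        have "PS g j = tr ` PS f j"
        proof (rule set_eqI)
          fix R
          have "R \<in> PS g j \<longleftrightarrow> tr R \<in> PS f j"
          proof -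
            have key: "(R < tr (f j)) = (tr R < f j)" if
              ceq: "cnt f (tr R) j = cnt f (f j) j + 1" and ne: "tr R \<noteq> f j"
            proof (rule ccontr)
              assume H: "(R < tr (f j)) \<noteq> (tr R < f j)"
              then have ij: "(tr R = i \<and> f j = Suc i) \<or> (tr R = Suc i \<and> f j = i)"
                using ne unfolding tr_def by (auto split: if_splits)
              show False
              proof (cases "j = t0")
                case True
                then have "cnt f i j = cnt f (Suc i) j" using Pt0 P_def by auto
                then show False using ceq ij by auto
              next
                case False
                then have jt': "t0 < Suc j" using jt by simp
                have sp: "{v\<in>{1..<Suc j}. f v = x} = {v\<in>{1..<j}. f v = x} \<union> (if f j = x then {j} else {})" for x
                  using jr by (auto simp: less_Suc_eq)
                have cs: "cnt f x (Suc j) = cnt f x j + (if f j = x then 1 else 0)" for x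
                  unfolding cnt_def sp by (auto simp: card_Un_disjoint)
                have "cnt f i (Suc j) = cnt f (Suc i) (Suc j)"
                  using ij ceq cs[of i] cs[of "Suc i"] by auto
                then have "P (Suc j)" unfolding P_def using jr by auto
                then show False using Pmax jt' by fastforce
              qed
            qed
            show ?thesis
              unfolding PS_def mem_Collect_eq gj cj trtr
              using key tr_eq by (smt (verit) trtr)
          qed
          then show "R \<in> PS g j \<longleftrightarrow> R \<in> tr ` PS f j"
            using trtr by (metis image_iff)
        qed
        moreover have "inj tr" by (metis injI trtr)
        ultimately have "card (PS g j) = card (PS f j)"
          by (simp add: card_image inj_on_subset)
        then show ?thesis unfolding Phi2_def by simp
      qed
    qed
  qed
  then show ?thesis using valid_g unfolding \<nu>_def n_def by blast
qed



definition e :: "nat list \<Rightarrow> nat \<Rightarrow> nat" where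
  "e \<mu> r = card {R. R < length \<mu> \<and> R \<noteq> r \<and> (\<mu>!r + 1 \<le> \<mu>!R \<or> (\<mu>!R = \<mu>!r \<and> R < r))}"

lemma cnt_Suc: "1 \<le> j \<Longrightarrow> cnt f x (Suc j) = cnt f x j + (if f j = x then 1 else 0)"
proof -
  assume j: "1 \<le> j"
  have sp: "{v\<in>{1..<Suc j}. f v = x} = {v\<in>{1..<j}. f v = x} \<union> (if f j = x then {j} else {})"
    using j by (auto simp: less_Suc_eq)
  show ?thesis unfolding cnt_def sp by (auto simp: card_Un_disjoint)
qed

lemma cnt_zero: "cnt f x (Suc 0) = 0" unfolding cnt_def by simp

lemma cnt_ge_len:
  assumes "valid \<mu> f" "length \<mu> \<le> R" "t \<le> Suc (sum_list \<mu>)"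
  shows "cnt f R t = 0"
proof -
  have "{v\<in>{1..<t}. f v = R} = {}"
  proof -
    { fix v assume "v \<in> {1..<t}" "f v = R"
      then have "v \<in> {1..sum_list \<mu>}" using assms(3) by auto
      then have "f v < length \<mu>" using assms(1) unfolding valid_def by auto
      then have False using \<open>f v = R\<close> assms(2) by simp }
    then show ?thesis by blast
  qed
  then show ?thesis unfolding cnt_def by simp
qed

lemma sum_update_dec:
  assumes "r < length \<mu>" "0 < \<mu>!r" "sum_list \<mu> = Suc m"
  shows "sum_list (\<mu>[r := \<mu>!r - 1]) = m"
  using assms sum_list_update[of r \<mu> "\<mu>!r - 1"] elem_le_sum_list[of r \<mu>] by simp

lemma rec_sub:
  assumes v: "valid \<mu> f" and s: "sum_list \<mu> = Suc m"
  shows "f (Suc m) < length \<mu> \<and> 0 < \<mu> ! f (Suc m) \<and> valid (\<mu>[f (Suc m) := \<mu>!f (Suc m) - 1]) f \<and>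
    Phi2 (Suc m) f = (Phi2 m f)(Suc m := e \<mu> (f (Suc m)))"
proof -
  define r where "r = f (Suc m)"
  have rl: "r < length \<mu>" using v s unfolding valid_def r_def by auto
  have full: "cnt f R (Suc (Suc m)) = \<mu>!R" if "R < length \<mu>" for R
    using v s that unfolding valid_def by auto
  have last: "cnt f R (Suc m) = (if R < length \<mu> then \<mu>!R else 0) - (if r = R then 1 else 0)" for R
  proof (cases "R < length \<mu>")
    case True
    then show ?thesis using cnt_Suc[of "Suc m" f R] full[OF True] unfolding r_def by auto
  next
    case False
    then show ?thesis using cnt_ge_len[OF v, of R "Suc m"] s rl by auto
  qed
  have pos: "0 < \<mu>!r" using cnt_Suc[of "Suc m" f r] full[OF rl] unfolding r_def by auto
  have sd: "sum_list (\<mu>[r := \<mu>!r - 1]) = m" using sum_update_dec[OF rl pos s] .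
  have vd: "valid (\<mu>[r := \<mu>!r - 1]) f"
    unfolding valid_def sd
  proof (intro conjI allI impI ballI)
    fix v assume "v \<in> {1..m}" then show "f v < length (\<mu>[r := \<mu> ! r - 1])"
      using v s unfolding valid_def by auto
  next
    fix R assume "R < length (\<mu>[r := \<mu> ! r - 1])"
    then show "cnt f R (Suc m) = \<mu>[r := \<mu> ! r - 1] ! R" using last[of R] by (auto simp: nth_list_update)
  qed
  have PSe: "PS f (Suc m) = {R. R < length \<mu> \<and> R \<noteq> r \<and> (\<mu>!r + 1 \<le> \<mu>!R \<or> (\<mu>!R = \<mu>!r \<and> R < r))}"
  proof (rule set_eqI)
    fix R
    show "R \<in> PS f (Suc m) \<longleftrightarrow> R \<in> {R. R < length \<mu> \<and> R \<noteq> r \<and> (\<mu>!r + 1 \<le> \<mu>!R \<or> (\<mu>!R = \<mu>!r \<and> R < r))}"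
      unfolding PS_def r_def[symmetric] using last[of R] last[of r] pos rl by auto
  qed
  have "Phi2 (Suc m) f = (Phi2 m f)(Suc m := e \<mu> r)"
  proof
    fix j
    show "Phi2 (Suc m) f j = ((Phi2 m f)(Suc m := e \<mu> r)) j"
    proof (cases "j = Suc m")
      case True
      show ?thesis
      proof (cases "m = 0")
        case True
        have "PS f (Suc 0) = {}" unfolding PS_def cnt_zero by simp
        then have "e \<mu> r = 0" unfolding e_def using PSe True by simp
        then show ?thesis using True \<open>j = Suc m\<close> unfolding Phi2_def by simp
      next
        case False
        then show ?thesis using \<open>j = Suc m\<close> PSe unfolding Phi2_def e_def by simp
      qed
    next
      case False
      then show ?thesis unfolding Phi2_def by auto
    qed
  qed
  then show ?thesis using rl pos vd unfolding r_def by simp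
qed

lemma Phi2_cong:
  assumes "\<And>v. 1 \<le> v \<Longrightarrow> v \<le> n \<Longrightarrow> f v = g v"
  shows "Phi2 n f = Phi2 n g"
proof
  fix j show "Phi2 n f j = Phi2 n g j"
    unfolding Phi2_def using PS_cong[of j f g] assms by auto
qed

lemma rec_sup:
  assumes rl: "r < length \<mu>" and pos: "0 < \<mu>!r" and s: "sum_list \<mu> = Suc m"
    and v: "valid (\<mu>[r := \<mu>!r - 1]) f"
  shows "valid \<mu> (f(Suc m := r)) \<and> Phi2 (Suc m) (f(Suc m := r)) = (Phi2 m f)(Suc m := e \<mu> r)"
proof -
  define g where "g = f(Suc m := r)"
  have sd: "sum_list (\<mu>[r := \<mu>!r - 1]) = m" using sum_update_dec[OF rl pos s] .
  have vg: "valid \<mu> g"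
    unfolding valid_def s
  proof (intro conjI allI impI ballI)
    fix x assume "x \<in> {1..Suc m}" then show "g x < length \<mu>"
      using v rl unfolding valid_def sd g_def by (auto simp: le_Suc_eq)
  next
    fix R assume R: "R < length \<mu>"
    have "cnt g R (Suc (Suc m)) = cnt g R (Suc m) + (if r = R then 1 else 0)"
      using cnt_Suc[of "Suc m" g R] unfolding g_def by simp
    also have "cnt g R (Suc m) = cnt f R (Suc m)" by (rule cnt_cong) (auto simp: g_def)
    also have "cnt f R (Suc m) = \<mu>[r := \<mu>!r - 1] ! R" using v R unfolding valid_def sd by auto
    finally show "cnt g R (Suc (Suc m)) = \<mu> ! R" using pos R by (auto simp: nth_list_update)
  qed
  have "Phi2 (Suc m) g = (Phi2 m g)(Suc m := e \<mu> (g (Suc m)))" using rec_sub[OF vg s] by simp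
  moreover have "Phi2 m g = Phi2 m f" by (rule Phi2_cong) (auto simp: g_def)
  ultimately show ?thesis using vg unfolding g_def by simp
qed

theorem A2_rec:
  assumes s: "sum_list \<mu> = Suc m"
  shows "A2 \<mu> = (\<Union>r\<in>{r. r < length \<mu> \<and> 0 < \<mu>!r}. (\<lambda>p. p(Suc m := e \<mu> r)) ` A2 (\<mu>[r := \<mu>!r - 1]))"
proof (rule set_eqI)
  fix p
  show "p \<in> A2 \<mu> \<longleftrightarrow> p \<in> (\<Union>r\<in>{r. r < length \<mu> \<and> 0 < \<mu>!r}. (\<lambda>p. p(Suc m := e \<mu> r)) ` A2 (\<mu>[r := \<mu>!r - 1]))"
  proof
    assume "p \<in> A2 \<mu>"
    then obtain f where v: "valid \<mu> f" and p: "p = Phi2 (Suc m) f" unfolding A2_def s by auto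
    note R = rec_sub[OF v s]
    define r where "r = f (Suc m)"
    have "sum_list (\<mu>[r := \<mu>!r - 1]) = m" using sum_update_dec[of r \<mu> m] R s unfolding r_def by simp
    then have "Phi2 m f \<in> A2 (\<mu>[r := \<mu>!r - 1])" unfolding A2_def using R unfolding r_def by force
    then show "p \<in> (\<Union>r\<in>{r. r < length \<mu> \<and> 0 < \<mu>!r}. (\<lambda>p. p(Suc m := e \<mu> r)) ` A2 (\<mu>[r := \<mu>!r - 1]))"
      using R p unfolding r_def by blast
  next
    assume "p \<in> (\<Union>r\<in>{r. r < length \<mu> \<and> 0 < \<mu>!r}. (\<lambda>p. p(Suc m := e \<mu> r)) ` A2 (\<mu>[r := \<mu>!r - 1]))"
    then obtain r q where rl: "r < length \<mu>" and pos: "0 < \<mu>!r" and q: "q \<in> A2 (\<mu>[r := \<mu>!r - 1])"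
      and p: "p = q(Suc m := e \<mu> r)" by blast
    have sd: "sum_list (\<mu>[r := \<mu>!r - 1]) = m" using sum_update_dec[OF rl pos s] .
    obtain f where v: "valid (\<mu>[r := \<mu>!r - 1]) f" and q': "q = Phi2 m f" using q unfolding A2_def sd by auto
    note R = rec_sup[OF rl pos s v]
    then show "p \<in> A2 \<mu>" unfolding A2_def s p q' mem_Collect_eq by (intro exI[of _ "f(Suc m := r)"]) simp
  qed
qed

lemma valid_exists: "\<exists>f. valid \<mu> f"
proof (induction "sum_list \<mu>" arbitrary: \<mu>)
  case 0
  have "\<mu>!r = 0" if "r < length \<mu>" for r using elem_le_sum_list[OF that] 0 by simp
  then have "valid \<mu> (\<lambda>_. 0)" unfolding valid_def using 0[symmetric] by (auto simp: cnt_def)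
  then show ?case by blast
next
  case (Suc m)
  have "\<exists>r<length \<mu>. 0 < \<mu>!r"
  proof (rule ccontr)
    assume "\<not> ?thesis"
    then have "\<forall>x\<in>set \<mu>. x = 0" by (auto simp: in_set_conv_nth)
    then have "sum_list \<mu> = 0" by (metis sum_list_eq_0_iff)
    then show False using Suc(2) by linarith
  qed
  then obtain r where rl: "r < length \<mu>" and pos: "0 < \<mu>!r" by blast
  have "sum_list (\<mu>[r := \<mu>!r - 1]) = m" using sum_update_dec[OF rl pos Suc(2)[symmetric]] .
  then obtain f where "valid (\<mu>[r := \<mu>!r - 1]) f" using Suc(1) by metis
  then show ?case using rec_sup[OF rl pos Suc(2)[symmetric]] by blast
qed

lemma A2_small:
  assumes "sum_list \<mu> \<le> 1"
  shows "A2 \<mu> = {(\<lambda>_. 0)}"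
proof -
  have "Phi2 (sum_list \<mu>) f = (\<lambda>_. 0)" for f using assms unfolding Phi2_def by auto
  then show ?thesis unfolding A2_def using valid_exists[of \<mu>] by auto
qed

lemma A2_swap:
  assumes "Suc i < length \<mu>"
  shows "A2 (\<mu>[i := \<mu>!Suc i, Suc i := \<mu>!i]) = A2 \<mu>"
proof -
  have sub: "A2 \<mu> \<subseteq> A2 (\<mu>[i := \<mu>!Suc i, Suc i := \<mu>!i])" if i: "Suc i < length \<mu>" for \<mu>
  proof
    fix p assume "p \<in> A2 \<mu>"
    then obtain f where v: "valid \<mu> f" and p: "p = Phi2 (sum_list \<mu>) f" unfolding A2_def by auto
    obtain g where g: "valid (\<mu>[i := \<mu>!Suc i, Suc i := \<mu>!i]) g" "Phi2 (sum_list \<mu>) g = Phi2 (sum_list \<mu>) f"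
      using swap_lemma[OF v i] by blast
    have "mset (\<mu>[i := \<mu>!Suc i, Suc i := \<mu>!i]) = mset \<mu>" using i mset_swap[of "Suc i" \<mu> i] by simp
    then have "sum_list (\<mu>[i := \<mu>!Suc i, Suc i := \<mu>!i]) = sum_list \<mu>" by (metis sum_mset_sum_list)
    then show "p \<in> A2 (\<mu>[i := \<mu>!Suc i, Suc i := \<mu>!i])" unfolding A2_def mem_Collect_eq using g p by (intro exI[of _ g]) simp
  qed
  define \<nu> where "\<nu> = \<mu>[i := \<mu>!Suc i, Suc i := \<mu>!i]"
  have "Suc i < length \<nu>" using assms unfolding \<nu>_def by simp
  moreover have "\<nu>[i := \<nu>!Suc i, Suc i := \<nu>!i] = \<mu>" unfolding \<nu>_def using assms
    by (auto simp: nth_list_update list_eq_iff_nth_eq)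
  ultimately have "A2 \<nu> \<subseteq> A2 \<mu>" using sub[of \<nu>] by simp
  then show ?thesis using sub[OF assms] unfolding \<nu>_def by blast
qed



lemma downclosed_eq:
  fixes S :: "nat set"
  assumes "finite S" "\<And>r r'. r \<in> S \<Longrightarrow> r' < r \<Longrightarrow> r' \<in> S"
  shows "S = {..<card S}"
proof -
  obtain N where N: "N \<notin> S" using assms(1) infinite_UNIV_nat by (meson ex_new_if_finite)
  define M where "M = (LEAST r. r \<notin> S)"
  have M1: "M \<notin> S" unfolding M_def by (rule LeastI[of _ N]) (rule N)
  have M2: "r < M \<Longrightarrow> r \<in> S" for r unfolding M_def using not_less_Least by blast
  have "S = {..<M}"
  proof
    show "S \<subseteq> {..<M}"
    proof
      fix r assume "r \<in> S"
      then show "r \<in> {..<M}" using assms(2)[of r M] M1 by (metis lessThan_iff linorder_neqE_nat)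
    qed
  qed (use M2 in auto)
  then show ?thesis by simp
qed

context
  fixes \<mu> :: "nat list"
  assumes d: "sorted (rev \<mu>)"
begin

definition NZ :: "nat set" where "NZ = {r. r < length \<mu> \<and> 0 < \<mu>!r}"

lemma mono_d: "i \<le> j \<Longrightarrow> j < length \<mu> \<Longrightarrow> \<mu>!j \<le> \<mu>!i"
  using sorted_rev_nth_mono[OF d] by blast

lemma NZ_eq: "NZ = {..<card NZ}"
proof (rule downclosed_eq)
  show "finite NZ" unfolding NZ_def by simp
next
  fix r r' assume "r \<in> NZ" "r' < r"
  then show "r' \<in> NZ" unfolding NZ_def using mono_d[of r' r] by auto
qed

lemma nonzero_rows_eq: "nonzero_rows (diagram \<mu>) = NZ"
  unfolding nonzero_rows_def diagram_def NZ_def by auto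

lemma row_len_eq: "r < length \<mu> \<Longrightarrow> row_len (diagram \<mu>) r = \<mu>!r"
  unfolding row_len_def diagram_def by simp

lemma far_right_eq: "far_right (diagram \<mu>) = (\<lambda>r. (r, \<mu>!r - 1)) ` NZ"
  unfolding far_right_def nonzero_rows_eq using row_len_eq unfolding NZ_def by auto

lemma dim_label_eq:
  assumes j: "j \<in> NZ"
  shows "dim_label (diagram \<mu>) (j, \<mu>!j - 1) = Suc j"
proof -
  have "{p \<in> far_right (diagram \<mu>). dim_before p (j, \<mu>!j - 1)} = (\<lambda>r. (r, \<mu>!r - 1)) ` {..<j}"
  proof (rule set_eqI)
    fix p
    show "p \<in> {p \<in> far_right (diagram \<mu>). dim_before p (j, \<mu>!j - 1)} \<longleftrightarrow> p \<in> (\<lambda>r. (r, \<mu>!r - 1)) ` {..<j}"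
    proof
      assume "p \<in> {p \<in> far_right (diagram \<mu>). dim_before p (j, \<mu>!j - 1)}"
      then obtain R where R: "R \<in> NZ" "p = (R, \<mu>!R - 1)" and db: "dim_before (R, \<mu>!R - 1) (j, \<mu>!j - 1)"
        unfolding far_right_eq by auto
      have "R < j"
      proof (rule ccontr)
        assume "\<not> R < j"
        then have "\<mu>!R \<le> \<mu>!j" using mono_d[of j R] R(1) unfolding NZ_def by auto
        then show False using db \<open>\<not> R < j\<close> unfolding dim_before_def by auto
      qed
      then show "p \<in> (\<lambda>r. (r, \<mu>!r - 1)) ` {..<j}" using R by auto
    next
      assume "p \<in> (\<lambda>r. (r, \<mu>!r - 1)) ` {..<j}"
      then obtain R where R: "R < j" "p = (R, \<mu>!R - 1)" by auto
      have "\<mu>!j \<le> \<mu>!R" using mono_d[of R j] R j unfolding NZ_def by auto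
      then have "dim_before p (j, \<mu>!j - 1)" using R j unfolding dim_before_def NZ_def by auto
      moreover have "R \<in> NZ" using j R mono_d[of R j] unfolding NZ_def by auto
      ultimately show "p \<in> {p \<in> far_right (diagram \<mu>). dim_before p (j, \<mu>!j - 1)}"
        unfolding far_right_eq using R by auto
    qed
  qed
  moreover have "card ((\<lambda>r. (r, \<mu>!r - 1)) ` {..<j}) = j"
    by (subst card_image) (auto simp: inj_on_def)
  ultimately show ?thesis unfolding dim_label_def by simp
qed

lemma the_box:
  assumes j: "j \<in> NZ"
  shows "(THE b. b \<in> far_right (diagram \<mu>) \<and> dim_label (diagram \<mu>) b = Suc j) = (j, \<mu>!j - 1)"
proof (rule the_equality)
  show "(j, \<mu>!j - 1) \<in> far_right (diagram \<mu>) \<and> dim_label (diagram \<mu>) (j, \<mu>!j - 1) = Suc j"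
    using dim_label_eq[OF j] j unfolding far_right_eq by auto
next
  fix b assume "b \<in> far_right (diagram \<mu>) \<and> dim_label (diagram \<mu>) b = Suc j"
  then obtain R where "R \<in> NZ" "b = (R, \<mu>!R - 1)" "dim_label (diagram \<mu>) b = Suc j"
    unfolding far_right_eq by auto
  then show "b = (j, \<mu>!j - 1)" using dim_label_eq by auto
qed

definition lastrow :: "nat \<Rightarrow> nat" where
  "lastrow j = (GREATEST l. l < length \<mu> \<and> \<mu>!l = \<mu>!j)"

lemma lastrow_props:
  assumes j: "j < length \<mu>"
  shows "j \<le> lastrow j" "lastrow j < length \<mu>" "\<mu>!lastrow j = \<mu>!j"
    "\<And>l. j \<le> l \<Longrightarrow> l \<le> lastrow j \<Longrightarrow> \<mu>!l = \<mu>!j"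
    "\<And>r. r < length \<mu> \<Longrightarrow> \<mu>!j \<le> \<mu>!r \<longleftrightarrow> r \<le> lastrow j"
proof -
  define P where "P l \<longleftrightarrow> l < length \<mu> \<and> \<mu>!l = \<mu>!j" for l
  have Pj: "P j" using j P_def by simp
  have Pb: "\<And>y. P y \<Longrightarrow> y \<le> length \<mu>" unfolding P_def by auto
  have PL: "P (lastrow j)" unfolding lastrow_def P_def[symmetric] by (rule GreatestI_nat[where P=P, OF Pj Pb])
  have Pm: "\<And>l. P l \<Longrightarrow> l \<le> lastrow j" unfolding lastrow_def P_def[symmetric]
    by (rule Greatest_le_nat[where P=P]) (use Pb in auto)
  show 1: "j \<le> lastrow j" using Pm[OF Pj] .
  show 2: "lastrow j < length \<mu>" "\<mu>!lastrow j = \<mu>!j" using PL P_def by auto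
  show "\<And>l. j \<le> l \<Longrightarrow> l \<le> lastrow j \<Longrightarrow> \<mu>!l = \<mu>!j"
    using mono_d 2 by (metis le_antisym le_less_trans)
  fix r assume r: "r < length \<mu>"
  show "\<mu>!j \<le> \<mu>!r \<longleftrightarrow> r \<le> lastrow j"
  proof
    assume a: "\<mu>!j \<le> \<mu>!r"
    show "r \<le> lastrow j"
    proof (cases "r \<le> j")
      case True then show ?thesis using 1 by simp
    next
      case False
      then have "\<mu>!r \<le> \<mu>!j" using mono_d r by simp
      then have "P r" using a r P_def by simp
      then show ?thesis using Pm by simp
    qed
  next
    assume "r \<le> lastrow j"
    then show "\<mu>!j \<le> \<mu>!r" using mono_d 2 by metis
  qed
qed

lemma diagram_dec:
  assumes "l < length \<mu>" "0 < \<mu>!l"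
  shows "diagram (\<mu>[l := \<mu>!l - 1]) = diagram \<mu> - {(l, \<mu>!l - 1)}"
  using assms unfolding diagram_def by (auto simp: nth_list_update split: if_splits)

lemma remove_push_eq:
  assumes j: "j \<in> NZ"
  shows "remove_push (diagram \<mu>) (j, \<mu>!j - 1) = diagram \<mu> - {(lastrow j, \<mu>!j - 1)}"
proof -
  have jl: "j < length \<mu>" and jp: "0 < \<mu>!j" using j NZ_def by auto
  note L = lastrow_props[OF jl]
  define c where "c = \<mu>!j - 1"
  have memD: "(r, c) \<in> diagram \<mu> \<longleftrightarrow> r \<le> lastrow j" for r
  proof -
    have "(r, c) \<in> diagram \<mu> \<longleftrightarrow> r < length \<mu> \<and> \<mu>!j \<le> \<mu>!r"
      unfolding diagram_def c_def using jp by auto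
    also have "\<dots> \<longleftrightarrow> r \<le> lastrow j" using L(2) L(5) by (auto simp del: not_le)
    finally show ?thesis .
  qed
  have img: "{(r' - 1, c) | r'. r' > j \<and> (r', c) \<in> diagram \<mu>} = {(r, c) | r. j \<le> r \<and> r < lastrow j}"
  proof (rule set_eqI)
    fix p :: "nat \<times> nat" show "p \<in> {(r' - 1, c) | r'. r' > j \<and> (r', c) \<in> diagram \<mu>} \<longleftrightarrow> p \<in> {(r, c) | r. j \<le> r \<and> r < lastrow j}"
      unfolding memD by (auto, rule_tac x="Suc (fst p)" in exI, auto)
  qed
  show ?thesis
  proof (rule set_eqI)
    fix p :: "nat \<times> nat"
    obtain r' c' where p: "p = (r', c')" by fastforce
    show "p \<in> remove_push (diagram \<mu>) (j, \<mu>!j - 1) \<longleftrightarrow> p \<in> diagram \<mu> - {(lastrow j, \<mu>!j - 1)}"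
    proof (cases "c' = c")
      case True
      have "p \<in> remove_push (diagram \<mu>) (j, \<mu>!j - 1) \<longleftrightarrow> r' < lastrow j"
        unfolding remove_push_def fst_conv snd_conv c_def[symmetric] img p True using memD[of r'] L(1) by auto
      moreover have "p \<in> diagram \<mu> - {(lastrow j, \<mu>!j - 1)} \<longleftrightarrow> r' < lastrow j"
        unfolding p True c_def[symmetric] using memD[of r'] by auto
      ultimately show ?thesis by simp
    next
      case False
      then show ?thesis unfolding remove_push_def fst_conv snd_conv c_def[symmetric] img p by auto
    qed
  qed
qed

lemma gp_child_eq:
  assumes j: "j \<in> NZ"
  shows "gp_child (diagram \<mu>) j = diagram (\<mu>[lastrow j := \<mu>!lastrow j - 1])"
proof -
  have jl: "j < length \<mu>" and jp: "0 < \<mu>!j" using j NZ_def by auto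
  note L = lastrow_props[OF jl]
  show ?thesis unfolding gp_child_def the_box[OF j] remove_push_eq[OF j]
    using diagram_dec[of "lastrow j"] L(2,3) jp by simp
qed

lemma sorted_dec:
  assumes j: "j < length \<mu>" "0 < \<mu>!j"
  shows "sorted (rev (\<mu>[lastrow j := \<mu>!lastrow j - 1]))"
proof -
  note L = lastrow_props[OF j(1)]
  show ?thesis unfolding sorted_rev_iff_nth_mono
  proof (intro allI impI)
    fix a b assume ab: "a \<le> b" "b < length (\<mu>[lastrow j := \<mu>!lastrow j - 1])"
    show "\<mu>[lastrow j := \<mu>!lastrow j - 1] ! b \<le> \<mu>[lastrow j := \<mu>!lastrow j - 1] ! a"
    proof (cases "a = lastrow j")
      case True
      then have "b = lastrow j \<or> \<mu>!b < \<mu>!j" using L(5)[of b] ab by auto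
      then show ?thesis using True ab L(2,3) mono_d[of a b] by (auto simp: nth_list_update)
    next
      case False
      then show ?thesis using ab mono_d[of a b] by (cases "b = lastrow j") auto
    qed
  qed
qed

lemma e_eq: "r \<in> NZ \<Longrightarrow> e \<mu> r = r"
proof -
  assume r: "r \<in> NZ"
  have "{R. R < length \<mu> \<and> R \<noteq> r \<and> (\<mu>!r + 1 \<le> \<mu>!R \<or> (\<mu>!R = \<mu>!r \<and> R < r))} = {..<r}"
  proof (rule set_eqI)
    fix R
    show "R \<in> {R. R < length \<mu> \<and> R \<noteq> r \<and> (\<mu>!r + 1 \<le> \<mu>!R \<or> (\<mu>!R = \<mu>!r \<and> R < r))} \<longleftrightarrow> R \<in> {..<r}"
    proof (cases "R < r")
      case True
      then show ?thesis using mono_d[of R r] r unfolding NZ_def by auto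
    next
      case False
      then show ?thesis using mono_d[of r R] r unfolding NZ_def by auto
    qed
  qed
  then show ?thesis unfolding e_def by simp
qed

end

lemma A2_chain:
  "j \<le> j' \<Longrightarrow> j' < length \<mu> \<Longrightarrow> (\<forall>l. j \<le> l \<and> l \<le> j' \<longrightarrow> \<mu>!l = \<mu>!j) \<Longrightarrow>
    A2 (\<mu>[j' := x]) = A2 (\<mu>[j := x])"
proof (induction j')
  case 0 then show ?case by simp
next
  case (Suc l)
  show ?case
  proof (cases "j = Suc l")
    case True then show ?thesis by simp
  next
    case False
    then have jl: "j \<le> l" using Suc.prems(1) by simp
    have IH: "A2 (\<mu>[l := x]) = A2 (\<mu>[j := x])"
    proof (rule Suc.IH)
      show "j \<le> l" by (rule jl)
      show "l < length \<mu>" using Suc.prems(2) by simp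
      show "\<forall>l'. j \<le> l' \<and> l' \<le> l \<longrightarrow> \<mu>!l' = \<mu>!j" using Suc.prems(3) le_SucI by blast
    qed
    have eq: "\<mu>!Suc l = \<mu>!l"
    proof -
      have "\<mu>!Suc l = \<mu>!j" using Suc.prems(1,3) by blast
      moreover have "\<mu>!l = \<mu>!j" using Suc.prems(3) jl le_SucI by blast
      ultimately show ?thesis by simp
    qed
    define \<nu> where "\<nu> = \<mu>[l := x]"
    have sl: "Suc l < length \<nu>" using Suc.prems(2) unfolding \<nu>_def by simp
    have "\<nu>[l := \<nu>!Suc l, Suc l := \<nu>!l] = \<mu>[Suc l := x]"
      unfolding \<nu>_def using Suc.prems(2) eq
      by (auto simp: nth_list_update list_eq_iff_nth_eq)
    then have "A2 (\<mu>[Suc l := x]) = A2 \<nu>" using A2_swap[OF sl] by simp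
    then show ?thesis using IH unfolding \<nu>_def by simp
  qed
qed



theorem gp_A2:
  assumes "sorted (rev \<mu>)"
  shows "gp_monos (sum_list \<mu>) (diagram \<mu>) = A2 \<mu>"
  using assms
proof (induction "sum_list \<mu>" arbitrary: \<mu>)
  case 0
  then show ?case using A2_small[of \<mu>] by (metis gp_monos.simps(1) le0)
next
  case (Suc m)
  note d = Suc(3)
  show ?case
  proof (cases m)
    case 0
    then show ?thesis using A2_small[of \<mu>] Suc(2) by (metis gp_monos.simps(2) le_refl One_nat_def)
  next
    case (Suc k)
    have child: "gp_monos (Suc k) (gp_child (diagram \<mu>) j) = A2 (\<mu>[j := \<mu>!j - 1])" if j: "j \<in> NZ \<mu>" for j
    proof -
      have jl: "j < length \<mu>" and jp: "0 < \<mu>!j" using j NZ_def[OF d] by auto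
      note L = lastrow_props[OF d jl]
      have sd: "sum_list (\<mu>[lastrow \<mu> j := \<mu>!lastrow \<mu> j - 1]) = m"
        using sum_update_dec[of "lastrow \<mu> j" \<mu> m] L(2,3) jp \<open>Suc m = sum_list \<mu>\<close> by simp
      have "gp_monos (Suc k) (gp_child (diagram \<mu>) j) = gp_monos m (diagram (\<mu>[lastrow \<mu> j := \<mu>!lastrow \<mu> j - 1]))"
        using gp_child_eq[OF d j] Suc by simp
      also have "\<dots> = A2 (\<mu>[lastrow \<mu> j := \<mu>!lastrow \<mu> j - 1])"
        using Suc.hyps(1)[OF sd[symmetric] sorted_dec[OF d jl jp]] sd by simp
      also have "\<dots> = A2 (\<mu>[j := \<mu>!j - 1])"
      proof -
        have "\<forall>l. j \<le> l \<and> l \<le> lastrow \<mu> j \<longrightarrow> \<mu>!l = \<mu>!j" using L(4) by blast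
        from A2_chain[OF L(1) L(2) this, of "\<mu>!j - 1"] show ?thesis using L(3) by simp
      qed
      finally show ?thesis .
    qed
    have "gp_monos (sum_list \<mu>) (diagram \<mu>) =
      (\<Union>j<card (NZ \<mu>). (\<lambda>p. p(Suc m := j)) ` gp_monos (Suc k) (gp_child (diagram \<mu>) j))"
      using \<open>Suc m = sum_list \<mu>\<close>[symmetric] Suc nonzero_rows_eq[OF d] by simp
    also have "\<dots> = (\<Union>j\<in>NZ \<mu>. (\<lambda>p. p(Suc m := j)) ` A2 (\<mu>[j := \<mu>!j - 1]))"
      using child NZ_eq[OF d] by (metis (no_types, lifting) SUP_cong)
    also have "\<dots> = (\<Union>r\<in>NZ \<mu>. (\<lambda>p. p(Suc m := e \<mu> r)) ` A2 (\<mu>[r := \<mu>!r - 1]))"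
      using e_eq[OF d] by simp
    also have "\<dots> = A2 \<mu>"
      using A2_rec[OF \<open>Suc m = sum_list \<mu>\<close>[symmetric]] unfolding NZ_def[OF d] by simp
    finally show ?thesis .
  qed
qed



context
  fixes \<mu> :: "nat list" and T :: "box \<Rightarrow> nat" and f :: "nat \<Rightarrow> nat"
  assumes rs: "row_strict_filling \<mu> T"
    and ft: "\<And>p. p \<in> diagram \<mu> \<Longrightarrow> f (T p) = fst p"
begin

lemma T_inj: "inj_on T (diagram \<mu>)" using rs unfolding row_strict_filling_def bij_betw_def by auto
lemma T_img: "T ` diagram \<mu> = {1..sum_list \<mu>}" using rs unfolding row_strict_filling_def bij_betw_def by auto

lemma T_less: "(r, c) \<in> diagram \<mu> \<Longrightarrow> (r, c') \<in> diagram \<mu> \<Longrightarrow> c < c' \<Longrightarrow> T (r, c) < T (r, c')"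
  using rs unfolding row_strict_filling_def by blast

lemma T_le: "(r, c) \<in> diagram \<mu> \<Longrightarrow> (r, c') \<in> diagram \<mu> \<Longrightarrow> c \<le> c' \<Longrightarrow> T (r, c) \<le> T (r, c')"
  using T_less by (cases "c = c'") (auto simp: less_imp_le)

lemma inD: "(r, c) \<in> diagram \<mu> \<longleftrightarrow> r < length \<mu> \<and> c < \<mu>!r" unfolding diagram_def by simp

lemma T_range: "p \<in> diagram \<mu> \<Longrightarrow> 1 \<le> T p \<and> T p \<le> sum_list \<mu>"
  using T_img by auto

lemma preimg:
  assumes R: "R < length \<mu>" and t: "t \<le> Suc (sum_list \<mu>)"
  shows "{v\<in>{1..<t}. f v = R} = (\<lambda>c. T (R, c)) ` {c. c < \<mu>!R \<and> T (R, c) < t}"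
proof (rule set_eqI)
  fix v
  show "v \<in> {v\<in>{1..<t}. f v = R} \<longleftrightarrow> v \<in> (\<lambda>c. T (R, c)) ` {c. c < \<mu>!R \<and> T (R, c) < t}"
  proof
    assume v: "v \<in> {v\<in>{1..<t}. f v = R}"
    then have "v \<in> T ` diagram \<mu>" using T_img t by auto
    then obtain p where p: "p \<in> diagram \<mu>" "v = T p" by auto
    then have "fst p = R" using ft v by auto
    then show "v \<in> (\<lambda>c. T (R, c)) ` {c. c < \<mu>!R \<and> T (R, c) < t}"
      using p v unfolding diagram_def by auto
  next
    assume "v \<in> (\<lambda>c. T (R, c)) ` {c. c < \<mu>!R \<and> T (R, c) < t}"
    then obtain c where c: "c < \<mu>!R" "T (R, c) < t" "v = T (R, c)" by auto
    then have "(R, c) \<in> diagram \<mu>" using R inD by auto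
    then show "v \<in> {v\<in>{1..<t}. f v = R}" using T_range ft c by fastforce
  qed
qed

lemma cnt_T:
  assumes R: "R < length \<mu>" and t: "t \<le> Suc (sum_list \<mu>)"
  shows "cnt f R t = card {c. c < \<mu>!R \<and> T (R, c) < t}"
proof -
  have "inj_on (\<lambda>c. T (R, c)) {c. c < \<mu>!R \<and> T (R, c) < t}"
  proof (rule inj_onI)
    fix x y assume x: "x \<in> {c. c < \<mu>!R \<and> T (R, c) < t}" and y: "y \<in> {c. c < \<mu>!R \<and> T (R, c) < t}"
      and eq: "T (R, x) = T (R, y)"
    have "(R, x) \<in> diagram \<mu>" "(R, y) \<in> diagram \<mu>" using x y R inD by auto
    then have "(R, x) = (R, y)" using inj_onD[OF T_inj eq] by blast
    then show "x = y" by simp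
  qed
  then show ?thesis unfolding cnt_def preimg[OF R t] by (rule card_image)
qed

lemma cnt_set:
  assumes R: "R < length \<mu>" and t: "t \<le> Suc (sum_list \<mu>)"
  shows "{c. c < \<mu>!R \<and> T (R, c) < t} = {..<cnt f R t}"
proof -
  have "{c. c < \<mu>!R \<and> T (R, c) < t} = {..<card {c. c < \<mu>!R \<and> T (R, c) < t}}"
  proof (rule downclosed_eq)
    show "finite {c. c < \<mu>!R \<and> T (R, c) < t}" by simp
  next
    fix r r' assume "r \<in> {c. c < \<mu>!R \<and> T (R, c) < t}" "r' < r"
    then show "r' \<in> {c. c < \<mu>!R \<and> T (R, c) < t}"
      using T_less[of R r' r] R inD by fastforce
  qed
  then show ?thesis using cnt_T[OF R t] by simp
qed

lemma cnt_iff: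
  assumes R: "R < length \<mu>" and t: "t \<le> Suc (sum_list \<mu>)" and c: "c < \<mu>!R"
  shows "T (R, c) < t \<longleftrightarrow> c < cnt f R t"
  using cnt_set[OF R t] c by (metis (no_types, lifting) lessThan_iff mem_Collect_eq)

lemma cnt_le_T:
  assumes R: "R < length \<mu>" and t: "t \<le> Suc (sum_list \<mu>)"
  shows "cnt f R t \<le> \<mu>!R"
proof -
  have "{..<cnt f R t} \<subseteq> {..<\<mu>!R}" unfolding cnt_set[OF R t, symmetric] by auto
  then show ?thesis by (simp add: lessThan_subset_iff)
qed

lemma valid_f: "valid \<mu> f"
  unfolding valid_def
proof (intro conjI ballI allI impI)
  fix v assume "v \<in> {1..sum_list \<mu>}"
  then obtain p where "p \<in> diagram \<mu>" "v = T p" using T_img by (metis imageE)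
  then show "f v < length \<mu>" using ft unfolding diagram_def by auto
next
  fix r assume r: "r < length \<mu>"
  have "{c. c < \<mu>!r \<and> T (r, c) < Suc (sum_list \<mu>)} = {..<\<mu>!r}"
    using T_range r inD by (auto simp: less_Suc_eq_le)
  then show "cnt f r (Suc (sum_list \<mu>)) = \<mu>!r" using cnt_T[OF r] by simp
qed

lemma Phi_eq_card:
  assumes b: "2 \<le> b" "b \<le> sum_list \<mu>"
  shows "card {a. dim_pair \<mu> T a b} = card (PS f b)"
proof -
  define n where "n = sum_list \<mu>"
  have bn: "b \<le> Suc n" using b n_def by simp
  obtain rq cq where q: "(rq, cq) \<in> diagram \<mu>" "T (rq, cq) = b"
    using T_img b by (metis (no_types, lifting) atLeastAtMost_iff imageE le_trans one_le_numeral surj_pair)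
  have rql: "rq < length \<mu>" and cql: "cq < \<mu>!rq" using q inD by auto
  have fb: "f b = rq" using ft q by force
  have cq: "cnt f rq b = cq"
  proof -
    have "{c. c < \<mu>!rq \<and> T (rq, c) < b} = {..<cq}"
    proof (rule set_eqI)
      fix c show "c \<in> {c. c < \<mu>!rq \<and> T (rq, c) < b} \<longleftrightarrow> c \<in> {..<cq}"
      proof (cases "c < cq")
        case True
        then have "T (rq, c) < b" using T_less[of rq c cq] q cql rql inD by auto
        then show ?thesis using True cql by auto
      next
        case False
        have "\<not> (c < \<mu>!rq \<and> T (rq, c) < b)"
        proof
          assume H: "c < \<mu>!rq \<and> T (rq, c) < b"
          then have "T (rq, cq) \<le> T (rq, c)" using T_le[of rq cq c] False q rql inD by auto
          then show False using H q by auto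
        qed
        then show ?thesis using False by auto
      qed
    qed
    then show ?thesis using cnt_set[OF rql, of b] bn n_def by (metis card_lessThan)
  qed
  define A where "A = {a. dim_pair \<mu> T a b}"
  have memA: "f a \<in> PS f b \<and> (\<exists>ca. (f a, ca) \<in> diagram \<mu> \<and> T (f a, ca) = a \<and> cnt f (f a) b = Suc ca)"
    if a: "a \<in> A" for a
  proof -
    obtain p q' where p: "p \<in> diagram \<mu>" and q': "q' \<in> diagram \<mu>" and Tp: "T p = a" and Tq: "T q' = b"
      and ab: "b > a"
      and geo: "(snd q' = snd p \<and> fst q' > fst p) \<or> snd q' < snd p"
      and nb: "(fst p, Suc (snd p)) \<in> diagram \<mu> \<longrightarrow> b \<le> T (fst p, Suc (snd p))"
      using a unfolding A_def dim_pair_def by blast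
    have qq: "q' = (rq, cq)" using T_inj q q' Tq by (metis inj_onD)
    obtain ra ca where pp: "p = (ra, ca)" by fastforce
    have fa: "f a = ra" using ft p Tp pp by force
    have ral: "ra < length \<mu>" and cal: "ca < \<mu>!ra" using p pp inD by auto
    have rne: "ra \<noteq> rq"
    proof
      assume "ra = rq"
      then show False using geo qq pp ab Tp q T_less[of rq cq ca] p by auto
    qed
    have cnta: "cnt f ra b = Suc ca"
    proof -
      have "{c. c < \<mu>!ra \<and> T (ra, c) < b} = {..<Suc ca}"
      proof (rule set_eqI)
        fix c
        show "c \<in> {c. c < \<mu>!ra \<and> T (ra, c) < b} \<longleftrightarrow> c \<in> {..<Suc ca}"
        proof (cases "c \<le> ca")
          case True
          then have "T (ra, c) \<le> a" using T_le[of ra c ca] p pp Tp inD cal ral by auto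
          then show ?thesis using True ab cal by auto
        next
          case False
          show ?thesis
          proof (cases "c < \<mu>!ra")
            case True
            then have "(ra, Suc ca) \<in> diagram \<mu>" using False inD ral by auto
            then have "b \<le> T (ra, Suc ca)" using nb pp by simp
            moreover have "T (ra, Suc ca) \<le> T (ra, c)" using T_le[of ra "Suc ca" c] False True inD ral by auto
            ultimately show ?thesis using False by auto
          qed (use False in auto)
        qed
      qed
      then show ?thesis using cnt_set[OF ral, of b] bn n_def by (metis card_lessThan)
    qed
    have "f a \<in> PS f b"
      unfolding PS_def fb fa cq using rne geo qq pp cnta by auto
    then show ?thesis using fa p pp Tp cnta by auto
  qed
  have inj: "inj_on f A"
  proof (rule inj_onI)
    fix a1 a2 assume a1: "a1 \<in> A" and a2: "a2 \<in> A" and eq: "f a1 = f a2"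
    obtain c1 where c1: "T (f a1, c1) = a1" "cnt f (f a1) b = Suc c1" using memA[OF a1] by blast
    obtain c2 where c2: "T (f a2, c2) = a2" "cnt f (f a2) b = Suc c2" using memA[OF a2] by blast
    show "a1 = a2" using c1 c2 eq by simp
  qed
  have img: "f ` A = PS f b"
  proof
    show "f ` A \<subseteq> PS f b" using memA by auto
  next
    show "PS f b \<subseteq> f ` A"
    proof
      fix R assume R: "R \<in> PS f b"
      define k where "k = cnt f R b"
      have kge: "Suc cq \<le> k" and Rne: "R \<noteq> rq"
        and geo: "cq + 2 \<le> k \<or> (k = cq + 1 \<and> R < rq)"
        using R unfolding PS_def fb cq k_def by auto
      have Rl: "R < length \<mu>"
      proof (rule ccontr)
        assume "\<not> R < length \<mu>"
        then have "cnt f R b = 0" using cnt_ge_len[OF valid_f, of R b] bn n_def by simp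
        then show False using kge k_def by simp
      qed
      have kle: "k \<le> \<mu>!R" using cnt_le_T[OF Rl, of b] bn n_def k_def by simp
      define a where "a = T (R, k - 1)"
      have pD: "(R, k - 1) \<in> diagram \<mu>" using Rl kle kge inD by auto
      have ab: "a < b" using cnt_iff[OF Rl, of b "k - 1"] bn n_def kle kge k_def a_def by simp
      have nb: "(R, Suc (k - 1)) \<in> diagram \<mu> \<longrightarrow> b \<le> T (R, Suc (k - 1))"
      proof
        assume "(R, Suc (k - 1)) \<in> diagram \<mu>"
        then have "Suc (k - 1) < \<mu>!R" using inD by auto
        then show "b \<le> T (R, Suc (k - 1))" using cnt_iff[OF Rl, of b "Suc (k - 1)"] bn n_def k_def kge
          by auto
      qed
      have "dim_pair \<mu> T a b"
        unfolding dim_pair_def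
        using ab pD q nb geo kge
        by (intro conjI bexI[of _ "(R, k - 1)"] bexI[of _ "(rq, cq)"]) (auto simp: a_def)
      moreover have "f a = R" using ft[OF pD] a_def by simp
      ultimately show "R \<in> f ` A" unfolding A_def by blast
    qed
  qed
  show ?thesis using card_image[OF inj] img unfolding A_def by simp
qed

lemma Phi_eq: "Phi \<mu> T = Phi2 (sum_list \<mu>) f"
proof
  fix j show "Phi \<mu> T j = Phi2 (sum_list \<mu>) f j"
    unfolding Phi_def Phi2_def using Phi_eq_card by auto
qed

end

lemma setA_sub: "setA \<mu> \<subseteq> A2 \<mu>"
proof
  fix p assume "p \<in> setA \<mu>"
  then obtain T where rs: "row_strict_filling \<mu> T" and p: "p = Phi \<mu> T" unfolding setA_def by auto
  define f where "f v = fst (inv_into (diagram \<mu>) T v)" for v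
  have ft: "f (T p) = fst p" if "p \<in> diagram \<mu>" for p
    using rs that unfolding f_def row_strict_filling_def bij_betw_def by simp
  show "p \<in> A2 \<mu>" unfolding A2_def using valid_f[OF rs ft] Phi_eq[OF rs ft] p by blast
qed

lemma setA_sup: "A2 \<mu> \<subseteq> setA \<mu>"
proof
  fix p assume "p \<in> A2 \<mu>"
  then obtain f where v: "valid \<mu> f" and p: "p = Phi2 (sum_list \<mu>) f" unfolding A2_def by auto
  define n where "n = sum_list \<mu>"
  define S where "S r = {v\<in>{1..<Suc n}. f v = r}" for r
  define T where "T = (\<lambda>(r, c). sorted_list_of_set (S r) ! c)"
  have finS: "finite (S r)" for r unfolding S_def by simp
  have lenS: "length (sorted_list_of_set (S r)) = \<mu>!r" if "r < length \<mu>" for r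
    using v that unfolding valid_def S_def cnt_def n_def by simp
  have TS: "T (r, c) \<in> S r" if "(r, c) \<in> diagram \<mu>" for r c
  proof -
    have "c < length (sorted_list_of_set (S r))" using lenS that unfolding diagram_def by auto
    then show ?thesis unfolding T_def using finS[of r] by (metis case_prod_conv nth_mem set_sorted_list_of_set)
  qed
  have ft: "f (T p) = fst p" if "p \<in> diagram \<mu>" for p
    using TS[of "fst p" "snd p"] that unfolding S_def by auto
  have rs: "row_strict_filling \<mu> T"
    unfolding row_strict_filling_def
  proof (intro conjI allI impI)
    show "bij_betw T (diagram \<mu>) {1..sum_list \<mu>}"
      unfolding bij_betw_def
    proof
      show "inj_on T (diagram \<mu>)"
      proof (rule inj_onI)
        fix p1 p2 assume p1: "p1 \<in> diagram \<mu>" and p2: "p2 \<in> diagram \<mu>" and eq: "T p1 = T p2"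
        have r: "fst p1 = fst p2" using ft[OF p1] ft[OF p2] eq by simp
        obtain r c1 c2 where pp: "p1 = (r, c1)" "p2 = (r, c2)" using r by (metis prod.collapse)
        have "c1 < length (sorted_list_of_set (S r))" "c2 < length (sorted_list_of_set (S r))"
          using p1 p2 pp lenS unfolding diagram_def by auto
        moreover have "distinct (sorted_list_of_set (S r))" by simp
        ultimately have "c1 = c2" using eq pp unfolding T_def by (simp add: nth_eq_iff_index_eq)
        then show "p1 = p2" using pp by simp
      qed
    next
      show "T ` diagram \<mu> = {1..sum_list \<mu>}"
      proof
        show "T ` diagram \<mu> \<subseteq> {1..sum_list \<mu>}" using TS unfolding S_def n_def by fastforce
      next
        show "{1..sum_list \<mu>} \<subseteq> T ` diagram \<mu>"
        proof
          fix x assume x: "x \<in> {1..sum_list \<mu>}"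
          define r where "r = f x"
          have rl: "r < length \<mu>" using v x unfolding valid_def r_def by auto
          have "x \<in> set (sorted_list_of_set (S r))" using finS x unfolding S_def r_def n_def by auto
          then obtain c where c: "c < length (sorted_list_of_set (S r))" "sorted_list_of_set (S r) ! c = x"
            by (metis in_set_conv_nth)
          then have "(r, c) \<in> diagram \<mu>" using lenS[OF rl] rl unfolding diagram_def by auto
          then show "x \<in> T ` diagram \<mu>" using c unfolding T_def by force
        qed
      qed
    qed
  next
    fix r c c' assume a: "(r, c) \<in> diagram \<mu>" "(r, c') \<in> diagram \<mu>" "c < c'"
    have "c' < length (sorted_list_of_set (S r))" using a lenS unfolding diagram_def by auto
    then show "T (r, c) < T (r, c')" unfolding T_def
      using sorted_wrt_nth_less[OF strict_sorted_list_of_set a(3)] by simp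
  qed
  have "p = Phi \<mu> T" using Phi_eq[OF rs ft] p by simp
  then show "p \<in> setA \<mu>" unfolding setA_def using rs by blast
qed

theorem setA_A2: "setA \<mu> = A2 \<mu>" using setA_sub setA_sup by blast


theorem mainTheorem8:
  fixes \<mu> :: "nat list" and n :: nat
  assumes "is_partition \<mu> n"
  shows "setA \<mu> = setB \<mu>"
proof -
  have "sorted (rev \<mu>)" using assms unfolding is_partition_def by simp
  then show ?thesis unfolding setB_def using setA_A2 gp_A2 by simp
qed

end
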